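(* Suppose that $\Sigma=(X,U,F)$ is a system, $Q\subset X$ is controlled invariant, and $(\mathcal{A},G)$ is a quasi-invariant-partition of $Q$. Then \[h_{inv}(\mathcal{A},G)=\lim_{m\to\infty}\frac1m\max_{\alpha\in W_m(\mathcal{A},G)}\sum_{i=0}^{m-2}w(\alpha(i)).\]
   Context: A system is a triple $\Sigma=(X,U,F)$ where $X,U$ are nonempty sets and $F:X\times U\rightrightarrows X$ is a set-valued map with $F(x,u)\neq\emptyset$ for all $(x,u)$; for $A\subset X$, $F(A,u)=\bigcup_{x\in A}F(x,u)$. $Q\subset X$ is controlled invariant if for every $x\in Q$ there is $u\in U$ with $F(x,u)\subset Q$. An invariant cover of $Q$ is a pair $(\mathcal{A},G)$ where $\mathcal{A}$ is a finite cover of $Q$ (by subsets of $Q$) and $G:\mathcal{A}\to U$ satisfies $F(A,G(A))\subset Q$ for all $A\in\mathcal{A}$. For $\mathcal{S}\subset\mathcal{A}^n$, $\alpha=\alpha(0)\cdots\alpha(n-1)\in\mathcal{S}$ and integer $0\le t<n-1$, let $P(\alpha|_{[0,t]})=\{A\in\mathcal{A}:\exists\hat\alpha\in\mathcal{S},\ \hat\alpha|_{[0,t]}=\alpha|_{[0,t]},\ A=\hat\alpha(t+1)\}$, and $P(\alpha|_{[0,n-1]})=P(\alpha)=\{\hat\alpha(0):\hat\alpha\in\mathcal{S}\}$. $\mathcal{S}$ is $(n,Q)$-spanning in $(\mathcal{A},G)$ if (1) the elements of $P(\alpha)$ cover $Q$, and (2) for every $\alpha\in\mathcal{S}$ and $0\le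 t<n-1$, $F(\alpha(t),G(\alpha(t)))\subset\bigcup_{A'\in P(\alpha|_{[0,t]})}A'$. Let $N(\mathcal{S})=\max_{\alpha\in\mathcal{S}}\prod_{t=0}^{n-1}\sharp P(\alpha|_{[0,t]})$, $r_{inv}(n,Q,\mathcal{A},G)=\min\{N(\mathcal{S}):\mathcal{S}\ (n,Q)\text{-spanning in }(\mathcal{A},G)\}$, and $h_{inv}(\mathcal{A},G)=\lim_{n\to\infty}\frac1n\log r_{inv}(n,Q,\mathcal{A},G)$ ($\log$ base $2$). For $A\in\mathcal{A}$: $D(A)=\{A'\in\mathcal{A}:F(A,G(A))\cap A'\neq\emptyset\}$ and $w(A)=\log\sharp D(A)$. $W_m(\mathcal{A},G)$ is the set of sequences $(A_i)_{i=0}^{m-1}$ in $\mathcal{A}$ with $F(A_i,G(A_i))\cap A_{i+1}\neq\emptyset$ for all $0\le i<m-1$. An invariant cover $(\mathcal{A},G)$ is a quasi-invariant-partition of $Q$ if $A\setminus\bigcup_{B\in\mathcal{A},B\neq A}B\neq\emptyset$ for all $A\in\mathcal{A}$, and $F(A,G(A))\cap\big(B\setminus\bigcup_{C\in D(A),C\neq B}C\big)\neq\emptyset$ for all $A\in\mathcal{A}$ and $B\in D(A)$. *)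

theory Defs
  imports Complex_Main
begin

(* A system (X,U,F): X, U are the (nonempty) types 'x, 'u; F : X x U => P(X). *)
definition is_system :: "('x \<Rightarrow> 'u \<Rightarrow> 'x set) \<Rightarrow> bool" where
  "is_system F \<longleftrightarrow> (\<forall>x u. F x u \<noteq> {})"

definition img :: "('x \<Rightarrow> 'u \<Rightarrow> 'x set) \<Rightarrow> 'x set \<Rightarrow> 'u \<Rightarrow> 'x set" where
  "img F A u = (\<Union>x\<in>A. F x u)"

definition controlled_invariant :: "('x \<Rightarrow> 'u \<Rightarrow> 'x set) \<Rightarrow> 'x set \<Rightarrow> bool" where
  "controlled_invariant F Q \<longleftrightarrow> (\<forall>x\<in>Q. \<exists>u. F x u \<subseteq> Q)"

definition invariant_cover ::
  "('x \<Rightarrow> 'u \<Rightarrow> 'x set) \<Rightarrow> 'x set \<Rightarrow> 'x set set \<Rightarrow> ('x set \<Rightarrow> 'u) \<Rightarrow> bool" where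
  "invariant_cover F Q \<A> G \<longleftrightarrow>
     finite \<A> \<and> (\<forall>A\<in>\<A>. A \<subseteq> Q) \<and> Q \<subseteq> \<Union>\<A> \<and>
     (\<forall>A\<in>\<A>. img F A (G A) \<subseteq> Q)"

(* Sequences alpha in A^n are lists of length n with entries in A;
   alpha(t) = alpha ! t. *)
definition seqs :: "'x set set \<Rightarrow> nat \<Rightarrow> 'x set list set" where
  "seqs \<A> n = {\<alpha>. length \<alpha> = n \<and> set \<alpha> \<subseteq> \<A>}"

(* P(alpha|_[0,t]) for t < n-1, and P(alpha|_[0,n-1]) = P(alpha) = {beta(0) | beta in S} *)
definition Pset :: "'x set list set \<Rightarrow> nat \<Rightarrow> 'x set list \<Rightarrow> nat \<Rightarrow> 'x set set" where
  "Pset S n \<alpha> t =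
     (if t < n - 1
      then {\<beta> ! (t + 1) | \<beta>. \<beta> \<in> S \<and> take (t + 1) \<beta> = take (t + 1) \<alpha>}
      else (\<lambda>\<beta>. \<beta> ! 0) ` S)"

definition spanning ::
  "('x \<Rightarrow> 'u \<Rightarrow> 'x set) \<Rightarrow> 'x set \<Rightarrow> 'x set set \<Rightarrow> ('x set \<Rightarrow> 'u) \<Rightarrow> nat
     \<Rightarrow> 'x set list set \<Rightarrow> bool" where
  "spanning F Q \<A> G n S \<longleftrightarrow>
     S \<subseteq> seqs \<A> n \<and>
     Q \<subseteq> \<Union>((\<lambda>\<beta>. \<beta> ! 0) ` S) \<and>
     (\<forall>\<alpha>\<in>S. \<forall>t. t < n - 1 \<longrightarrow>
        img F (\<alpha> ! t) (G (\<alpha> ! t)) \<subseteq> \<Union>(Pset S n \<alpha> t))"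

(* N(S); convention: 0 for S = {} (only relevant in degenerate cases) *)
definition NS :: "'x set list set \<Rightarrow> nat \<Rightarrow> nat" where
  "NS S n = (if S = {} then 0 else Max ((\<lambda>\<alpha>. \<Prod>t<n. card (Pset S n \<alpha> t)) ` S))"

definition r_inv ::
  "('x \<Rightarrow> 'u \<Rightarrow> 'x set) \<Rightarrow> 'x set \<Rightarrow> nat \<Rightarrow> 'x set set \<Rightarrow> ('x set \<Rightarrow> 'u) \<Rightarrow> nat" where
  "r_inv F Q n \<A> G = Min {NS S n | S. spanning F Q \<A> G n S}"

definition h_inv ::
  "('x \<Rightarrow> 'u \<Rightarrow> 'x set) \<Rightarrow> 'x set \<Rightarrow> 'x set set \<Rightarrow> ('x set \<Rightarrow> 'u) \<Rightarrow> real" where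
  "h_inv F Q \<A> G = lim (\<lambda>n. log 2 (real (r_inv F Q n \<A> G)) / real n)"

definition Dset ::
  "('x \<Rightarrow> 'u \<Rightarrow> 'x set) \<Rightarrow> 'x set set \<Rightarrow> ('x set \<Rightarrow> 'u) \<Rightarrow> 'x set \<Rightarrow> 'x set set" where
  "Dset F \<A> G A = {A'\<in>\<A>. img F A (G A) \<inter> A' \<noteq> {}}"

definition wt ::
  "('x \<Rightarrow> 'u \<Rightarrow> 'x set) \<Rightarrow> 'x set set \<Rightarrow> ('x set \<Rightarrow> 'u) \<Rightarrow> 'x set \<Rightarrow> real" where
  "wt F \<A> G A = log 2 (real (card (Dset F \<A> G A)))"

definition Wm ::
  "('x \<Rightarrow> 'u \<Rightarrow> 'x set) \<Rightarrow> 'x set set \<Rightarrow> ('x set \<Rightarrow> 'u) \<Rightarrow> nat \<Rightarrow> 'x set list set" where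
  "Wm F \<A> G m = {\<alpha>. length \<alpha> = m \<and> set \<alpha> \<subseteq> \<A> \<and>
     (\<forall>i. i + 1 < m \<longrightarrow> img F (\<alpha> ! i) (G (\<alpha> ! i)) \<inter> \<alpha> ! (i + 1) \<noteq> {})}"

definition quasi_invariant_partition ::
  "('x \<Rightarrow> 'u \<Rightarrow> 'x set) \<Rightarrow> 'x set \<Rightarrow> 'x set set \<Rightarrow> ('x set \<Rightarrow> 'u) \<Rightarrow> bool" where
  "quasi_invariant_partition F Q \<A> G \<longleftrightarrow>
     invariant_cover F Q \<A> G \<and>
     (\<forall>A\<in>\<A>. A - \<Union>(\<A> - {A}) \<noteq> {}) \<and>
     (\<forall>A\<in>\<A>. \<forall>B\<in>Dset F \<A> G A.
        img F A (G A) \<inter> (B - \<Union>(Dset F \<A> G A - {B})) \<noteq> {})"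

(* (1/m) max_{alpha in W_m} sum_{i=0}^{m-2} w(alpha(i)); convention 0 if W_m = {} *)
definition rhs_seq ::
  "('x \<Rightarrow> 'u \<Rightarrow> 'x set) \<Rightarrow> 'x set set \<Rightarrow> ('x set \<Rightarrow> 'u) \<Rightarrow> nat \<Rightarrow> real" where
  "rhs_seq F \<A> G m =
     (if Wm F \<A> G m = {} then 0
      else Max ((\<lambda>\<alpha>. \<Sum>i<m - 1. wt F \<A> G (\<alpha> ! i)) ` Wm F \<A> G m)) / real m"

end

theory Submission imports Defs begin

lemma fek_div:
  fixes a :: "nat \<Rightarrow> real"
  assumes sub: "\<And>m n. a (m+n) \<le> a m + a n"
  shows "a (q*k + r) \<le> real q * a k + a r"
proof (induction q)
  case 0 then show ?case by simp
next
  case (Suc q)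
  have "a (Suc q * k + r) = a (k + (q*k+r))" by (simp add: algebra_simps)
  also have "\<dots> \<le> a k + a (q*k+r)" by (rule sub)
  also have "\<dots> \<le> a k + (real q * a k + a r)" using Suc by simp
  finally show ?case by (simp add: algebra_simps)
qed

lemma fekete:
  fixes a :: "nat \<Rightarrow> real"
  assumes sub: "\<And>m n. a (m+n) \<le> a m + a n" and nn: "\<And>n. a n \<ge> 0"
  shows "\<exists>L. (\<lambda>n. a n / real n) \<longlonglongrightarrow> L"
proof -
  define S where "S = (\<lambda>n. a n / real n) ` {1..}"
  define L where "L = Inf S"
  have Sne: "S \<noteq> {}" unfolding S_def by auto
  have bdd: "bdd_below S" unfolding S_def using nn by (intro bdd_belowI[of _ 0]) auto
  have low: "L \<le> a n / real n" if "n \<ge> 1" for n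
    unfolding L_def S_def using that bdd[unfolded S_def] by (intro cInf_lower) auto
  have "(\<lambda>n. a n / real n) \<longlonglongrightarrow> L"
  proof (rule LIMSEQ_I)
    fix r :: real assume r: "r > 0"
    have "Inf S < L + r/2" using r L_def by simp
    then obtain s where "s \<in> S" "s < L + r/2" using cInf_less_iff[OF Sne bdd] by blast
    then obtain k where k: "k \<ge> 1" "a k / real k < L + r/2" unfolding S_def by auto
    define B where "B = Max (a ` {..<k})"
    have B: "a j \<le> B" if "j < k" for j unfolding B_def using that by (intro Max_ge) auto
    have B0: "B \<ge> 0" using B[of 0] nn[of 0] k by linarith
    obtain N :: nat where N: "N > 2*B/r" using reals_Archimedean2 by blast
    show "\<exists>no. \<forall>n\<ge>no. norm (a n / real n - L) < r"
    proof (intro exI[of _ "Suc N"] allI impI)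
      fix n assume n: "n \<ge> Suc N"
      have npos: "real n > 0" using n by simp
      have dec: "n = (n div k) * k + n mod k" by simp
      have "a n \<le> real (n div k) * a k + a (n mod k)"
        using fek_div[OF sub, of "n div k" k "n mod k"] dec by simp
      also have "\<dots> \<le> real (n div k) * a k + B" using B[of "n mod k"] k by simp
      also have "real (n div k) * a k \<le> (real n / real k) * a k"
        using nn[of k] of_nat_div_le_of_nat by (intro mult_right_mono) auto
      finally have "a n \<le> real n * (a k / real k) + B" by simp
      then have h1: "a n / real n \<le> a k / real k + B / real n"
        using npos by (simp add: field_simps)
      moreover have h2: "B / real n < r/2"
      proof -
        have "real n > 2*B/r" using N n by linarith
        then have "2*B < real n * r" using r by (simp add: field_simps)
        then show ?thesis using npos by (simp add: field_simps)
      qed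
      moreover have h3: "L \<le> a n / real n" using low n by simp
      ultimately have "a n / real n - L < r" "a n / real n - L \<ge> 0" using k(2) by linarith+
      then show "norm (a n / real n - L) < r" by simp
    qed
  qed
  then show ?thesis by blast
qed

lemma prod_list_map_nth: "prod_list (map f xs) = (\<Prod>i<length xs. f (xs ! i))"
proof (induction xs)
  case Nil then show ?case by simp
next
  case (Cons x xs) then show ?case by (simp add: prod.lessThan_Suc_shift del: prod.lessThan_Suc)
qed

lemma prod_list_butlast: "xs \<noteq> [] \<Longrightarrow> prod_list (map f xs) = prod_list (map f (butlast xs)) * (f (last xs) :: nat)"
  by (induction xs) auto

locale qipl =
  fixes F :: "'x \<Rightarrow> 'u \<Rightarrow> 'x set" and Q :: "'x set"
    and \<A> :: "'x set set" and G :: "'x set \<Rightarrow> 'u"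
  assumes sys: "is_system F" and qip: "quasi_invariant_partition F Q \<A> G"
begin

abbreviation "D \<equiv> Dset F \<A> G"
abbreviation "W \<equiv> Wm F \<A> G"
abbreviation "im A \<equiv> img F A (G A)"

definition pr :: "'x set list \<Rightarrow> nat" where
  "pr \<alpha> = prod_list (map (\<lambda>A. card (D A)) (butlast \<alpha>))"

lemma ic: "invariant_cover F Q \<A> G" using qip unfolding quasi_invariant_partition_def by (rule conjunct1)
lemma finA: "finite \<A>" using ic unfolding invariant_cover_def by (rule conjunct1)
lemma subQ: "A \<in> \<A> \<Longrightarrow> A \<subseteq> Q" using ic unfolding invariant_cover_def by simp
lemma cov: "Q \<subseteq> \<Union>\<A>" using ic unfolding invariant_cover_def by simp
lemma inv: "A \<in> \<A> \<Longrightarrow> im A \<subseteq> Q" using ic unfolding invariant_cover_def by simp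
lemma priv: "A \<in> \<A> \<Longrightarrow> A - \<Union>(\<A> - {A}) \<noteq> {}"
  using qip unfolding quasi_invariant_partition_def by simp
lemma privD: "A \<in> \<A> \<Longrightarrow> B \<in> D A \<Longrightarrow> im A \<inter> (B - \<Union>(D A - {B})) \<noteq> {}"
  using qip unfolding quasi_invariant_partition_def by simp

lemma A_ne: "A \<in> \<A> \<Longrightarrow> A \<noteq> {}" using priv by blast

lemma im_ne: assumes "A \<in> \<A>" shows "im A \<noteq> {}"
proof -
  obtain x where "x \<in> A" using A_ne[OF assms] by blast
  moreover have "F x (G A) \<noteq> {}" using sys unfolding is_system_def by blast
  ultimately show ?thesis unfolding img_def by blast
qed

lemma D_sub: "D A \<subseteq> \<A>" unfolding Dset_def by blast
lemma D_fin: "finite (D A)" using finite_subset[OF D_sub finA] .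

lemma im_cover: assumes "A \<in> \<A>" shows "im A \<subseteq> \<Union>(D A)"
proof
  fix x assume x: "x \<in> im A"
  then have "x \<in> Q" using inv[OF assms] by blast
  then obtain A' where "A' \<in> \<A>" "x \<in> A'" using cov by blast
  then show "x \<in> \<Union>(D A)" using x unfolding Dset_def by blast
qed

lemma D_ne: assumes "A \<in> \<A>" shows "D A \<noteq> {}"
  using im_cover[OF assms] im_ne[OF assms] by blast

lemma D_card: "A \<in> \<A> \<Longrightarrow> card (D A) \<ge> 1"
  using D_ne D_fin by (simp add: Suc_le_eq card_gt_0_iff)

lemma PP1: assumes "C \<subseteq> \<A>" "Q \<subseteq> \<Union>C" "B \<in> \<A>" shows "B \<in> C"
proof -
  obtain x where x: "x \<in> B" "x \<notin> \<Union>(\<A> - {B})" using priv[OF assms(3)] by blast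
  then have "x \<in> Q" using subQ[OF assms(3)] by blast
  then obtain C' where "C' \<in> C" "x \<in> C'" using assms(2) by blast
  then show ?thesis using x assms(1) by blast
qed

lemma PP2: assumes "A \<in> \<A>" "B \<in> D A" "P \<subseteq> \<A>" "im A \<subseteq> \<Union>P" shows "B \<in> P"
proof -
  obtain y where y: "y \<in> im A" "y \<in> B" "y \<notin> \<Union>(D A - {B})" using privD[OF assms(1,2)] by blast
  then obtain C' where C': "C' \<in> P" "y \<in> C'" using assms(4) by blast
  then have "C' \<in> D A" using y assms(3) unfolding Dset_def by blast
  then show ?thesis using y C' by blast
qed

lemma W_iff: "\<alpha> \<in> W n \<longleftrightarrow> length \<alpha> = n \<and> set \<alpha> \<subseteq> \<A> \<and>
     (\<forall>i. i + 1 < n \<longrightarrow> im (\<alpha> ! i) \<inter> \<alpha> ! (i + 1) \<noteq> {})"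
  unfolding Wm_def by simp

lemma W_nth: assumes "\<beta> \<in> W n" "i < n" shows "\<beta> ! i \<in> \<A>"
proof -
  have "length \<beta> = n" "set \<beta> \<subseteq> \<A>" using assms(1) unfolding W_iff by simp_all
  then show ?thesis using nth_mem[of i \<beta>] assms(2) by auto
qed

lemma W_len: "\<beta> \<in> W n \<Longrightarrow> length \<beta> = n"
  unfolding W_iff by auto

lemma W_set: "\<beta> \<in> W n \<Longrightarrow> set \<beta> \<subseteq> \<A>"
  unfolding W_iff by simp

lemma W_fin: "finite (W n)"
  by (rule finite_subset[OF _ finite_lists_length_eq[OF finA, of n]]) (auto simp: W_iff)

lemma W_take: assumes "\<alpha> \<in> W n" "k \<le> n" shows "take k \<alpha> \<in> W k"
  using assms unfolding W_iff by (auto dest: in_set_takeD)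

lemma W_drop: assumes "\<alpha> \<in> W n" "k \<le> n" shows "drop k \<alpha> \<in> W (n - k)"
  using assms unfolding W_iff
  by (auto dest: in_set_dropD)

lemma W_snoc: assumes "\<alpha> \<in> W n" "n \<ge> 1" "b \<in> D (last \<alpha>)" shows "\<alpha> @ [b] \<in> W (Suc n)"
proof -
  have len: "length \<alpha> = n" and s: "set \<alpha> \<subseteq> \<A>" using assms(1) unfolding W_iff by auto
  have b: "b \<in> \<A>" "im (last \<alpha>) \<inter> b \<noteq> {}" using assms(3) unfolding Dset_def by auto
  have "\<alpha> \<noteq> []" using len assms(2) by auto
  then have lst: "last \<alpha> = \<alpha> ! (n - 1)" using len by (simp add: last_conv_nth)
  show ?thesis unfolding W_iff
  proof (intro conjI allI impI)
    show "length (\<alpha> @ [b]) = Suc n" using len by simp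
    show "set (\<alpha> @ [b]) \<subseteq> \<A>" using s b by simp
    fix i assume i: "i + 1 < Suc n"
    show "im ((\<alpha> @ [b]) ! i) \<inter> (\<alpha> @ [b]) ! (i + 1) \<noteq> {}"
    proof (cases "i + 1 < n")
      case True then show ?thesis using assms(1) len unfolding W_iff by (simp add: nth_append)
    next
      case False then have "i = n - 1" using i by simp
      then show ?thesis using b lst len assms(2) by (simp add: nth_append)
    qed
  qed
qed

lemma W_single: "b \<in> \<A> \<Longrightarrow> [b] \<in> W 1" unfolding W_iff by simp

lemma W_extend: assumes "\<alpha> \<in> W k" "1 \<le> k" "k \<le> n" shows "\<exists>\<beta>\<in>W n. take k \<beta> = \<alpha>"
  using assms(3)
proof (induction n rule: dec_induct)
  case base
  have "length \<alpha> = k" using assms(1) unfolding W_iff by blast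
  then show ?case using assms(1) by (intro bexI[of _ \<alpha>]) auto
next
  case (step n)
  then obtain \<beta> where \<beta>: "\<beta> \<in> W n" "take k \<beta> = \<alpha>" by blast
  have len: "length \<beta> = n" "set \<beta> \<subseteq> \<A>" using \<beta>(1) unfolding W_iff by auto
  have "\<beta> \<noteq> []" using len step assms(2) by auto
  then have "last \<beta> \<in> \<A>" using len by auto
  then obtain b where b: "b \<in> D (last \<beta>)" using D_ne by blast
  have "\<beta> @ [b] \<in> W (Suc n)" using W_snoc[OF \<beta>(1) _ b] step assms(2) by simp
  moreover have "take k (\<beta> @ [b]) = \<alpha>" using \<beta>(2) len step by simp
  ultimately show ?case by blast
qed

lemma W_ne: assumes "\<A> \<noteq> {}" "n \<ge> 1" shows "W n \<noteq> {}"
proof -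
  obtain b where "b \<in> \<A>" using assms by blast
  then have "[b] \<in> W 1" by (rule W_single)
  then obtain \<beta> where "\<beta> \<in> W n" using W_extend[of "[b]" 1 n] assms(2) by blast
  then show ?thesis by blast
qed

lemma pr_nth: "pr \<alpha> = (\<Prod>t<length \<alpha> - 1. card (D (\<alpha> ! t)))"
  unfolding pr_def prod_list_map_nth by (simp add: nth_butlast)

lemma pr_pos: "set \<alpha> \<subseteq> \<A> \<Longrightarrow> pr \<alpha> \<ge> 1"
  unfolding pr_def
proof (induction \<alpha>)
  case Nil then show ?case by simp
next
  case (Cons a \<alpha>)
  show ?case
  proof (cases "\<alpha> = []")
    case True then show ?thesis by simp
  next
    case False
    have c1: "card (D a) \<ge> 1" using D_card Cons by simp
    have c2: "prod_list (map (\<lambda>A. card (D A)) (butlast \<alpha>)) \<ge> 1" using Cons by simp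
    have "prod_list (map (\<lambda>A. card (D A)) (butlast (a # \<alpha>))) = card (D a) * prod_list (map (\<lambda>A. card (D A)) (butlast \<alpha>))"
      using False by simp
    then show ?thesis using c1 c2 by (metis mult_le_mono nat_mult_1)
  qed
qed

lemma pr_append: assumes "xs \<noteq> []" "ys \<noteq> []"
  shows "pr (xs @ ys) = pr xs * card (D (last xs)) * pr ys"
proof -
  have "prod_list (map (\<lambda>A. card (D A)) xs) = pr xs * card (D (last xs))"
    unfolding pr_def using prod_list_butlast[OF assms(1)] by simp
  then show ?thesis using assms unfolding pr_def by (simp add: butlast_append)
qed


lemma take_eq_nth: "take k \<beta> = take k \<alpha> \<Longrightarrow> i < k \<Longrightarrow> \<beta> ! i = \<alpha> ! i"
  by (metis nth_take)

lemma seqs_fin: "finite (seqs \<A> n)"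
  unfolding seqs_def using finite_lists_length_eq[OF finA, of n] by (simp add: conj_commute)

lemma W_seqs: "W n \<subseteq> seqs \<A> n" by (auto simp: seqs_def W_iff)

lemma W_step: assumes "\<gamma> \<in> W n" "i + 1 < n" shows "\<gamma> ! (i+1) \<in> D (\<gamma> ! i)"
proof -
  have "\<gamma> ! (i+1) \<in> \<A>" "\<gamma> ! i \<in> \<A>" using assms unfolding W_iff by auto
  moreover have "im (\<gamma> ! i) \<inter> \<gamma> ! (i+1) \<noteq> {}" using assms unfolding W_iff by auto
  ultimately show ?thesis unfolding Dset_def by auto
qed

lemma heads_W: assumes "n \<ge> 1" shows "(\<lambda>\<beta>. \<beta> ! 0) ` W n = \<A>"
proof
  show "(\<lambda>\<beta>. \<beta> ! 0) ` W n \<subseteq> \<A>" using assms W_nth by auto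
  show "\<A> \<subseteq> (\<lambda>\<beta>. \<beta> ! 0) ` W n"
  proof
    fix b assume "b \<in> \<A>"
    then have "[b] \<in> W 1" by (rule W_single)
    then obtain \<beta> where "\<beta> \<in> W n" "take 1 \<beta> = [b]" using W_extend[of "[b]" 1 n] assms by blast
    moreover then have "\<beta> ! 0 = b" using take_eq_nth[of 1 \<beta> "[b]" 0] by simp
    ultimately show "b \<in> (\<lambda>\<beta>. \<beta> ! 0) ` W n" by force
  qed
qed

lemma last_take: "t < length \<alpha> \<Longrightarrow> last (take (Suc t) \<alpha>) = \<alpha> ! t"
  by (simp add: take_Suc_conv_app_nth)

lemma Pset_W: assumes a: "\<alpha> \<in> W n" and t: "t < n - 1" shows "Pset (W n) n \<alpha> t = D (\<alpha> ! t)"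
proof -
  have len: "length \<alpha> = n" using a unfolding W_iff by auto
  have "{\<beta> ! (t + 1) | \<beta>. \<beta> \<in> W n \<and> take (t + 1) \<beta> = take (t + 1) \<alpha>} = D (\<alpha> ! t)"
  proof (intro equalityI subsetI)
    fix B assume "B \<in> {\<beta> ! (t + 1) | \<beta>. \<beta> \<in> W n \<and> take (t + 1) \<beta> = take (t + 1) \<alpha>}"
    then obtain \<beta> where b: "B = \<beta> ! (t+1)" "\<beta> \<in> W n" "take (t + 1) \<beta> = take (t + 1) \<alpha>" by blast
    have e: "\<beta> ! t = \<alpha> ! t" using take_eq_nth[OF b(3)] by simp
    have "t + 1 < n" using t by simp
    then have "\<beta> ! (t+1) \<in> D (\<beta> ! t)" by (rule W_step[OF b(2)])
    then show "B \<in> D (\<alpha> ! t)" using e b(1) by simp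
  next
    fix B assume B: "B \<in> D (\<alpha> ! t)"
    have tk: "take (Suc t) \<alpha> \<in> W (Suc t)" using W_take[OF a] t by simp
    have tl: "t < length \<alpha>" using len t by simp
    have "last (take (Suc t) \<alpha>) = \<alpha> ! t" by (rule last_take[OF tl])
    then have ext: "take (Suc t) \<alpha> @ [B] \<in> W (Suc (Suc t))" using W_snoc[OF tk] B by simp
    have tn: "Suc (Suc t) \<le> n" using t by simp
    obtain \<beta> where \<beta>: "\<beta> \<in> W n" "take (Suc (Suc t)) \<beta> = take (Suc t) \<alpha> @ [B]"
      using W_extend[OF ext _ tn] by auto
    have "\<beta> ! (Suc t) = (take (Suc (Suc t)) \<beta>) ! Suc t" by simp
    also have "\<dots> = (take (Suc t) \<alpha> @ [B]) ! Suc t" using \<beta>(2) by simp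
    also have "\<dots> = B" using tl by (simp add: nth_append)
    finally have "\<beta> ! (Suc t) = B" .
    moreover have "take (Suc t) \<beta> = take (Suc t) \<alpha>"
    proof -
      have "take (Suc t) \<beta> = take (Suc t) (take (Suc (Suc t)) \<beta>)" by simp
      also have "\<dots> = take (Suc t) \<alpha>" using \<beta>(2) len t by simp
      finally show ?thesis .
    qed
    ultimately show "B \<in> {\<beta> ! (t + 1) | \<beta>. \<beta> \<in> W n \<and> take (t + 1) \<beta> = take (t + 1) \<alpha>}"
      using \<beta>(1) by force
  qed
  then show ?thesis unfolding Pset_def using t by simp
qed

lemma W_spanning: assumes "n \<ge> 1" shows "spanning F Q \<A> G n (W n)"
  unfolding spanning_def
proof (intro conjI ballI allI impI)
  show "W n \<subseteq> seqs \<A> n" by (rule W_seqs)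
  show "Q \<subseteq> \<Union> ((\<lambda>\<beta>. \<beta> ! 0) ` W n)" using heads_W[OF assms] cov by simp
  fix \<alpha> t assume a: "\<alpha> \<in> W n" and t: "t < n - 1"
  have "\<alpha> ! t \<in> \<A>" using a t unfolding W_iff by auto
  then show "im (\<alpha> ! t) \<subseteq> \<Union> (Pset (W n) n \<alpha> t)" using Pset_W[OF a t] im_cover by simp
qed

definition pmax :: "nat \<Rightarrow> nat" where "pmax n = Max (pr ` W n)"

lemma gamma_ex: assumes "\<A> \<noteq> {}" "n \<ge> 1"
  shows "\<exists>\<gamma>\<in>W n. pr \<gamma> = pmax n \<and> (\<forall>\<alpha>\<in>W n. pr \<alpha> \<le> pr \<gamma>)"
proof -
  have "pmax n \<in> pr ` W n" unfolding pmax_def using W_fin W_ne[OF assms] by (intro Max_in) auto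
  then obtain \<gamma> where "\<gamma> \<in> W n" "pr \<gamma> = pmax n" by auto
  moreover have "\<forall>\<alpha>\<in>W n. pr \<alpha> \<le> pmax n" unfolding pmax_def using W_fin by auto
  ultimately show ?thesis by auto
qed

lemma prod_split: fixes n :: nat assumes "n \<ge> 1"
  shows "(\<Prod>t<n. f t) = (\<Prod>t<n-1. f t) * (f (n-1) :: nat)"
proof -
  obtain m where "n = Suc m" using assms by (cases n) auto
  then show ?thesis by simp
qed

lemma NS_W: assumes "\<A> \<noteq> {}" "n \<ge> 1" shows "NS (W n) n = card \<A> * pmax n"
proof -
  have eq: "(\<Prod>t<n. card (Pset (W n) n \<alpha> t)) = pr \<alpha> * card \<A>" if a: "\<alpha> \<in> W n" for \<alpha>
  proof -
    have len: "length \<alpha> = n" using a unfolding W_iff by auto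
    have "(\<Prod>t<n. card (Pset (W n) n \<alpha> t)) = (\<Prod>t<n-1. card (Pset (W n) n \<alpha> t)) * card (Pset (W n) n \<alpha> (n-1))"
      by (rule prod_split[OF assms(2)])
    also have "(\<Prod>t<n-1. card (Pset (W n) n \<alpha> t)) = (\<Prod>t<n-1. card (D (\<alpha> ! t)))"
      using Pset_W[OF a] by (intro prod.cong) auto
    also have "\<dots> = pr \<alpha>" using pr_nth len by simp
    also have "Pset (W n) n \<alpha> (n-1) = \<A>" unfolding Pset_def using heads_W[OF assms(2)] by simp
    finally show ?thesis .
  qed
  obtain \<gamma> where g: "\<gamma> \<in> W n" "pr \<gamma> = pmax n" "\<forall>\<alpha>\<in>W n. pr \<alpha> \<le> pr \<gamma>" using gamma_ex[OF assms] by blast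
  have ne: "W n \<noteq> {}" using g by auto
  have "Max ((\<lambda>\<alpha>. \<Prod>t<n. card (Pset (W n) n \<alpha> t)) ` W n) = pr \<gamma> * card \<A>"
  proof (rule Max_eqI)
    show "finite ((\<lambda>\<alpha>. \<Prod>t<n. card (Pset (W n) n \<alpha> t)) ` W n)" using W_fin by simp
    show "pr \<gamma> * card \<A> \<in> (\<lambda>\<alpha>. \<Prod>t<n. card (Pset (W n) n \<alpha> t)) ` W n" using eq g(1) by force
    fix y assume "y \<in> (\<lambda>\<alpha>. \<Prod>t<n. card (Pset (W n) n \<alpha> t)) ` W n"
    then obtain \<alpha> where "\<alpha> \<in> W n" "y = pr \<alpha> * card \<A>" using eq by auto
    then show "y \<le> pr \<gamma> * card \<A>" using g(3) by simp
  qed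
  then show ?thesis unfolding NS_def using ne g(2) by simp
qed


lemma span_props: assumes "spanning F Q \<A> G n S"
  shows "S \<subseteq> seqs \<A> n" "Q \<subseteq> \<Union>((\<lambda>\<beta>. \<beta> ! 0) ` S)"
    "\<And>\<alpha> t. \<alpha> \<in> S \<Longrightarrow> t < n - 1 \<Longrightarrow> im (\<alpha> ! t) \<subseteq> \<Union>(Pset S n \<alpha> t)"
proof -
  have h: "S \<subseteq> seqs \<A> n \<and> Q \<subseteq> \<Union>((\<lambda>\<beta>. \<beta> ! 0) ` S) \<and>
     (\<forall>\<alpha>\<in>S. \<forall>t. t < n - 1 \<longrightarrow> im (\<alpha> ! t) \<subseteq> \<Union>(Pset S n \<alpha> t))"
    using assms unfolding spanning_def by simp
  then show "S \<subseteq> seqs \<A> n" by (rule conjunct1)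
  from h show "Q \<subseteq> \<Union>((\<lambda>\<beta>. \<beta> ! 0) ` S)" by (metis conjunct1 conjunct2)
  fix \<alpha> t assume "\<alpha> \<in> S" "t < n - 1"
  with h show "im (\<alpha> ! t) \<subseteq> \<Union>(Pset S n \<alpha> t)" by (metis conjunct2)
qed

lemma seqs_nth: assumes "S \<subseteq> seqs \<A> n" "\<beta> \<in> S" "i < n" shows "\<beta> ! i \<in> \<A>"
proof -
  have "length \<beta> = n" "set \<beta> \<subseteq> \<A>" using assms(1,2) unfolding seqs_def by auto
  then show ?thesis using nth_mem[of i \<beta>] assms(3) by auto
qed

lemma seqs_len: assumes "S \<subseteq> seqs \<A> n" "\<beta> \<in> S" shows "length \<beta> = n"
  using assms unfolding seqs_def by auto

lemma Pset_sub: assumes "S \<subseteq> seqs \<A> n" "n \<ge> 1" shows "Pset S n \<alpha> t \<subseteq> \<A>"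
proof (cases "t < n - 1")
  case True
  have "\<beta> ! (t+1) \<in> \<A>" if "\<beta> \<in> S" for \<beta>
    using seqs_nth[OF assms(1) that] True by simp
  then show ?thesis unfolding Pset_def using True by auto
next
  case False
  have "\<beta> ! 0 \<in> \<A>" if "\<beta> \<in> S" for \<beta>
    using seqs_nth[OF assms(1) that] assms(2) by simp
  then show ?thesis unfolding Pset_def using False by auto
qed

lemma heads_S: assumes sp: "spanning F Q \<A> G n S" and n: "n \<ge> 1"
  shows "(\<lambda>\<beta>. \<beta> ! 0) ` S = \<A>"
proof
  have "(\<lambda>\<beta>. \<beta> ! 0) ` S = Pset S n \<alpha> (n-1)" for \<alpha> unfolding Pset_def by simp
  then show "(\<lambda>\<beta>. \<beta> ! 0) ` S \<subseteq> \<A>" using Pset_sub[OF span_props(1)[OF sp] n] by metis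
  then have hs: "(\<lambda>\<beta>. \<beta> ! 0) ` S \<subseteq> \<A>" .
  show "\<A> \<subseteq> (\<lambda>\<beta>. \<beta> ! 0) ` S"
  proof
    fix b assume "b \<in> \<A>"
    then show "b \<in> (\<lambda>\<beta>. \<beta> ! 0) ` S" by (rule PP1[OF hs span_props(2)[OF sp]])
  qed
qed

lemma D_sub_Pset: assumes sp: "spanning F Q \<A> G n S" and n: "n \<ge> 1" and b: "\<beta> \<in> S" and t: "t < n - 1"
  shows "D (\<beta> ! t) \<subseteq> Pset S n \<beta> t"
proof -
  have bt: "\<beta> ! t \<in> \<A>" using seqs_nth[OF span_props(1)[OF sp] b] t by simp
  show ?thesis
  proof
    fix B assume "B \<in> D (\<beta> ! t)"
    then show "B \<in> Pset S n \<beta> t"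
      by (rule PP2[OF bt _ Pset_sub[OF span_props(1)[OF sp] n] span_props(3)[OF sp b t]])
  qed
qed

lemma gamma_in: assumes sp: "spanning F Q \<A> G n S" and n: "n \<ge> 1" and g: "\<gamma> \<in> W n"
  shows "\<gamma> \<in> S"
proof -
  have leng: "length \<gamma> = n" by (rule W_len[OF g])
  have Sl: "length \<beta> = n" if "\<beta> \<in> S" for \<beta> using that span_props(1)[OF sp] unfolding seqs_def by auto
  have "\<exists>\<beta>\<in>S. take (Suc j) \<beta> = take (Suc j) \<gamma>" if j: "Suc j \<le> n" for j :: nat
    using j
  proof (induction j)
    case 0
    have "\<gamma> ! 0 \<in> \<A>" using W_nth[OF g] n by simp
    then obtain \<beta> where \<beta>: "\<beta> \<in> S" "\<beta> ! 0 = \<gamma> ! 0" using heads_S[OF sp n] by force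
    have "take 1 \<beta> = [\<beta> ! 0]" using Sl[OF \<beta>(1)] n by (cases \<beta>) auto
    moreover have "take 1 \<gamma> = [\<gamma> ! 0]" using leng n by (cases \<gamma>) auto
    ultimately show ?case using \<beta> by (intro bexI[of _ \<beta>]) simp_all
  next
    case (Suc j)
    define k where "k = Suc j"
    have kn: "Suc k \<le> n" using Suc.prems k_def by simp
    obtain \<beta> where \<beta>: "\<beta> \<in> S" "take k \<beta> = take k \<gamma>" using Suc.IH kn k_def by auto
    have k1: "j < n - 1" "j + 1 = k" using kn k_def by auto
    have eqn: "\<beta> ! j = \<gamma> ! j" using take_eq_nth[OF \<beta>(2), of j] k_def by simp
    have "j + 1 < n" using kn k_def by simp
    then have "\<gamma> ! (j+1) \<in> D (\<gamma> ! j)" by (rule W_step[OF g])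
    then have "\<gamma> ! k \<in> D (\<beta> ! j)" using eqn k1 by simp
    then have "\<gamma> ! k \<in> Pset S n \<beta> j" using D_sub_Pset[OF sp n \<beta>(1) k1(1)] by blast
    then obtain \<beta>' where \<beta>': "\<beta>' \<in> S" "take k \<beta>' = take k \<beta>" "\<beta>' ! k = \<gamma> ! k"
      unfolding Pset_def using k1 by auto
    have "take (Suc k) \<beta>' = take k \<beta>' @ [\<beta>' ! k]" using Sl[OF \<beta>'(1)] kn by (simp add: take_Suc_conv_app_nth)
    also have "\<dots> = take k \<gamma> @ [\<gamma> ! k]" using \<beta>' \<beta>(2) by simp
    also have "\<dots> = take (Suc k) \<gamma>" using leng kn by (simp add: take_Suc_conv_app_nth)
    finally show ?case using \<beta>'(1) k_def by blast
  qed
  note ex = this[of "n - 1"]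
  have sn: "Suc (n - 1) = n" using n by simp
  obtain \<beta> where "\<beta> \<in> S" "take n \<beta> = take n \<gamma>" using ex unfolding sn by auto
  then show ?thesis using Sl leng by simp
qed

lemma NS_lower: assumes sp: "spanning F Q \<A> G n S" and n: "n \<ge> 1" and g: "\<gamma> \<in> W n"
  shows "card \<A> * pr \<gamma> \<le> NS S n"
proof -
  have gS: "\<gamma> \<in> S" by (rule gamma_in[OF sp n g])
  have finS: "finite S" by (rule finite_subset[OF span_props(1)[OF sp] seqs_fin])
  have len: "length \<gamma> = n" by (rule W_len[OF g])
  have "pr \<gamma> = (\<Prod>t<n-1. card (D (\<gamma> ! t)))" using pr_nth len by simp
  also have "\<dots> \<le> (\<Prod>t<n-1. card (Pset S n \<gamma> t))"
  proof (rule prod_mono)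
    fix t assume "t \<in> {..<n-1}"
    then have "D (\<gamma> ! t) \<subseteq> Pset S n \<gamma> t" using D_sub_Pset[OF sp n gS] by simp
    then show "0 \<le> card (D (\<gamma> ! t)) \<and> card (D (\<gamma> ! t)) \<le> card (Pset S n \<gamma> t)"
      using card_mono[OF finite_subset[OF Pset_sub[OF span_props(1)[OF sp] n] finA]] by simp
  qed
  finally have "pr \<gamma> * card \<A> \<le> (\<Prod>t<n-1. card (Pset S n \<gamma> t)) * card (Pset S n \<gamma> (n-1))"
    using heads_S[OF sp n] unfolding Pset_def by simp
  also have "\<dots> = (\<Prod>t<n. card (Pset S n \<gamma> t))" using prod_split[OF n] by simp
  also have "\<dots> \<le> NS S n" unfolding NS_def using gS finS by auto
  finally show ?thesis by (simp add: mult.commute)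
qed

lemma r_inv_eq: assumes "\<A> \<noteq> {}" "n \<ge> 1" shows "r_inv F Q n \<A> G = card \<A> * pmax n"
proof -
  obtain \<gamma> where g: "\<gamma> \<in> W n" "pr \<gamma> = pmax n" using gamma_ex[OF assms] by blast
  show ?thesis unfolding r_inv_def
  proof (rule Min_eqI)
    have "{NS S n |S. spanning F Q \<A> G n S} \<subseteq> (\<lambda>S. NS S n) ` Pow (seqs \<A> n)"
      unfolding spanning_def by auto
    then show "finite {NS S n |S. spanning F Q \<A> G n S}"
      by (rule finite_subset) (simp add: seqs_fin)
    show "card \<A> * pmax n \<in> {NS S n |S. spanning F Q \<A> G n S}"
      using NS_W[OF assms] W_spanning[OF assms(2)] by force
    fix y assume "y \<in> {NS S n |S. spanning F Q \<A> G n S}"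
    then show "card \<A> * pmax n \<le> y" using NS_lower[OF _ assms(2) g(1)] g(2) by auto
  qed
qed


lemma W0: "W 0 = {[]}" by (auto simp: W_iff)

lemma pmax_ge1: assumes ne: "\<A> \<noteq> {}" shows "pmax n \<ge> 1"
proof -
  obtain \<alpha> where a: "\<alpha> \<in> W n"
  proof (cases "n = 0")
    case True then show ?thesis using that W0 by auto
  next
    case False
    then show ?thesis using W_ne[OF ne, of n] that by auto
  qed
  have "pr \<alpha> \<ge> 1" by (rule pr_pos[OF W_set[OF a]])
  moreover have "pr \<alpha> \<le> pmax n" unfolding pmax_def using a W_fin by auto
  ultimately show ?thesis by linarith
qed

definition cmax :: nat where "cmax = Max ((\<lambda>A. card (D A)) ` \<A>)"

lemma cmax_ge: "A \<in> \<A> \<Longrightarrow> card (D A) \<le> cmax"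
  unfolding cmax_def using finA by auto

lemma cmax_ge1: assumes "\<A> \<noteq> {}" shows "cmax \<ge> 1"
proof -
  obtain A where A: "A \<in> \<A>" using assms by blast
  show ?thesis using le_trans[OF D_card[OF A] cmax_ge[OF A]] .
qed

lemma pmax_sub: assumes ne: "\<A> \<noteq> {}" shows "pmax (m + n) \<le> pmax m * cmax * pmax n"
proof (cases "m = 0 \<or> n = 0")
  case True
  have p1: "pmax m \<ge> 1" "pmax n \<ge> 1" "cmax \<ge> 1" using pmax_ge1[OF ne] cmax_ge1[OF ne] by auto
  have "1 * 1 * pmax n \<le> pmax m * cmax * pmax n" using p1 by (intro mult_le_mono) auto
  moreover have "pmax m * 1 * 1 \<le> pmax m * cmax * pmax n" using p1 by (intro mult_le_mono) auto
  ultimately have "pmax m * cmax * pmax n \<ge> pmax n" "pmax m * cmax * pmax n \<ge> pmax m" by simp_all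
  then show ?thesis using True by auto
next
  case False
  then have mn: "m \<ge> 1" "n \<ge> 1" by auto
  obtain \<gamma> where g: "\<gamma> \<in> W (m+n)" "pr \<gamma> = pmax (m+n)" using gamma_ex[OF ne, of "m+n"] mn by auto
  have len: "length \<gamma> = m + n" by (rule W_len[OF g(1)])
  have xs: "take m \<gamma> \<in> W m" using W_take[OF g(1)] by simp
  have ys: "drop m \<gamma> \<in> W n" using W_drop[OF g(1), of m] by simp
  have xne: "take m \<gamma> \<noteq> []" and yne: "drop m \<gamma> \<noteq> []" using len mn by auto
  have "last (take m \<gamma>) \<in> \<A>" using W_set[OF xs] last_in_set[OF xne] by blast
  then have cl: "card (D (last (take m \<gamma>))) \<le> cmax" by (rule cmax_ge)
  have p1: "pr (take m \<gamma>) \<le> pmax m" unfolding pmax_def using xs W_fin by auto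
  have p2: "pr (drop m \<gamma>) \<le> pmax n" unfolding pmax_def using ys W_fin by auto
  have "pmax (m+n) = pr (take m \<gamma> @ drop m \<gamma>)" using g by simp
  also have "\<dots> = pr (take m \<gamma>) * card (D (last (take m \<gamma>))) * pr (drop m \<gamma>)"
    by (rule pr_append[OF xne yne])
  also have "\<dots> \<le> pmax m * cmax * pmax n" using p1 p2 cl by (intro mult_le_mono) auto
  finally show ?thesis .
qed

lemma sum_wt: assumes a: "\<alpha> \<in> W m"
  shows "(\<Sum>i<m-1. wt F \<A> G (\<alpha> ! i)) = log 2 (real (pr \<alpha>))"
proof -
  have len: "length \<alpha> = m" by (rule W_len[OF a])
  have pos: "real (card (D (\<alpha> ! i))) \<noteq> 0" if "i \<in> {..<m-1}" for i
  proof -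
    have "\<alpha> ! i \<in> \<A>" using that W_nth[OF a] by simp
    then show ?thesis using D_card by fastforce
  qed
  have "log 2 (real (pr \<alpha>)) = ln (\<Prod>i<m-1. real (card (D (\<alpha> ! i)))) / ln 2"
    unfolding pr_nth len log_def by simp
  also have "\<dots> = (\<Sum>i<m-1. ln (real (card (D (\<alpha> ! i))))) / ln 2"
    using ln_prod[of "{..<m-1}"] pos by simp
  also have "\<dots> = (\<Sum>i<m-1. wt F \<A> G (\<alpha> ! i))"
    unfolding wt_def log_def by (simp add: sum_divide_distrib)
  finally show ?thesis by simp
qed

lemma rhs_eq: assumes ne: "\<A> \<noteq> {}" and m: "m \<ge> 1"
  shows "rhs_seq F \<A> G m = log 2 (real (pmax m)) / real m"
proof -
  obtain \<gamma> where g: "\<gamma> \<in> W m" "pr \<gamma> = pmax m" "\<forall>\<alpha>\<in>W m. pr \<alpha> \<le> pr \<gamma>"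
    using gamma_ex[OF ne m] by blast
  have "Max ((\<lambda>\<alpha>. \<Sum>i<m - 1. wt F \<A> G (\<alpha> ! i)) ` W m) = log 2 (real (pr \<gamma>))"
  proof (rule Max_eqI)
    show "finite ((\<lambda>\<alpha>. \<Sum>i<m - 1. wt F \<A> G (\<alpha> ! i)) ` W m)" using W_fin by simp
    show "log 2 (real (pr \<gamma>)) \<in> (\<lambda>\<alpha>. \<Sum>i<m - 1. wt F \<A> G (\<alpha> ! i)) ` W m"
      using sum_wt g(1) by force
    fix y assume "y \<in> (\<lambda>\<alpha>. \<Sum>i<m - 1. wt F \<A> G (\<alpha> ! i)) ` W m"
    then obtain \<alpha> where a: "\<alpha> \<in> W m" "y = log 2 (real (pr \<alpha>))" using sum_wt by auto
    have "pr \<alpha> \<ge> 1" by (rule pr_pos[OF W_set[OF a(1)]])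
    moreover have "pr \<alpha> \<le> pr \<gamma>" using a(1) g(3) by blast
    ultimately have "real (pr \<alpha>) \<le> real (pr \<gamma>)" "real (pr \<alpha>) > 0" by simp_all
    then show "y \<le> log 2 (real (pr \<gamma>))" using a(2) by simp
  qed
  then show ?thesis unfolding rhs_seq_def using g by auto
qed

lemma main_ne: assumes ne: "\<A> \<noteq> {}"
  shows "convergent (\<lambda>n. log 2 (real (r_inv F Q n \<A> G)) / real n)
         \<and> rhs_seq F \<A> G \<longlonglongrightarrow> h_inv F Q \<A> G"
proof -
  define a where "a n = log 2 (real (pmax n)) + log 2 (real cmax)" for n
  have c1: "real cmax \<ge> 1" using cmax_ge1[OF ne] by simp
  have p1: "real (pmax n) \<ge> 1" for n using pmax_ge1[OF ne] by simp
  have "a (m+n) \<le> a m + a n" for m n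
  proof -
    have "real (pmax (m+n)) \<le> real (pmax m) * real cmax * real (pmax n)"
      using pmax_sub[OF ne, of m n] by (metis of_nat_le_iff of_nat_mult)
    then have "log 2 (real (pmax (m+n))) \<le> log 2 (real (pmax m) * real cmax * real (pmax n))"
      using p1[of "m+n"] by simp
    also have "\<dots> = log 2 (real (pmax m)) + log 2 (real cmax) + log 2 (real (pmax n))"
      using p1[of m] p1[of n] c1 by (simp add: log_mult)
    finally show ?thesis unfolding a_def by simp
  qed
  moreover have "a n \<ge> 0" for n unfolding a_def using p1[of n] c1 by simp
  ultimately obtain L where L: "(\<lambda>n. a n / real n) \<longlonglongrightarrow> L" using fekete by blast
  have L1: "(\<lambda>n. log 2 (real (pmax n)) / real n) \<longlonglongrightarrow> L"
  proof -
    have "(\<lambda>n. a n / real n - log 2 (real cmax) / real n) \<longlonglongrightarrow> L - 0"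
      by (intro tendsto_diff L lim_const_over_n)
    then show ?thesis unfolding a_def by (simp add: add_divide_distrib)
  qed
  have ev: "eventually (\<lambda>n. n \<ge> 1) sequentially" by (rule eventually_ge_at_top)
  have R: "rhs_seq F \<A> G \<longlonglongrightarrow> L"
  proof (rule Lim_transform_eventually[OF L1])
    show "\<forall>\<^sub>F n in sequentially. log 2 (real (pmax n)) / real n = rhs_seq F \<A> G n"
      using ev by (rule eventually_mono) (simp add: rhs_eq[OF ne])
  qed
  have H: "(\<lambda>n. log 2 (real (r_inv F Q n \<A> G)) / real n) \<longlonglongrightarrow> L"
  proof -
    have K: "real (card \<A>) > 0" using ne finA by (simp add: card_gt_0_iff)
    have "(\<lambda>n. log 2 (real (card \<A>)) / real n + log 2 (real (pmax n)) / real n) \<longlonglongrightarrow> 0 + L"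
      by (intro tendsto_add L1 lim_const_over_n)
    moreover have "eventually (\<lambda>n. log 2 (real (card \<A>)) / real n + log 2 (real (pmax n)) / real n
        = log 2 (real (r_inv F Q n \<A> G)) / real n) sequentially"
      using ev
    proof (rule eventually_mono)
      fix n :: nat assume "n \<ge> 1"
      then have "r_inv F Q n \<A> G = card \<A> * pmax n" by (rule r_inv_eq[OF ne])
      then show "log 2 (real (card \<A>)) / real n + log 2 (real (pmax n)) / real n
        = log 2 (real (r_inv F Q n \<A> G)) / real n"
        using K p1[of n] by (simp add: log_mult add_divide_distrib)
    qed
    ultimately show ?thesis using Lim_transform_eventually by fastforce
  qed
  have "h_inv F Q \<A> G = L" unfolding h_inv_def using H by (rule limI)
  then show ?thesis using H R unfolding convergent_def by auto
qed


lemma main_empty: assumes e: "\<A> = {}"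
  shows "convergent (\<lambda>n. log 2 (real (r_inv F Q n \<A> G)) / real n)
         \<and> rhs_seq F \<A> G \<longlonglongrightarrow> h_inv F Q \<A> G"
proof -
  have Q: "Q = {}" using cov e by auto
  have r0: "r_inv F Q n \<A> G = 0" for n
    unfolding r_inv_def
  proof (rule Min_eqI)
    have "{NS S n |S. spanning F Q \<A> G n S} \<subseteq> (\<lambda>S. NS S n) ` Pow (seqs \<A> n)"
      unfolding spanning_def by auto
    then show "finite {NS S n |S. spanning F Q \<A> G n S}"
      by (rule finite_subset) (simp add: seqs_fin)
    have "spanning F Q \<A> G n {}" unfolding spanning_def using Q by auto
    moreover have "NS {} n = 0" unfolding NS_def by simp
    ultimately show "0 \<in> {NS S n |S. spanning F Q \<A> G n S}" by force
  qed auto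
  have w0: "rhs_seq F \<A> G m = 0" for m
  proof (cases "m = 0")
    case True then show ?thesis unfolding rhs_seq_def by simp
  next
    case False
    have "W m = {}"
    proof (rule ccontr)
      assume "W m \<noteq> {}"
      then obtain x where x: "x \<in> W m" by blast
      then have "set x \<subseteq> {}" using W_set e by blast
      then have "x = []" by simp
      then show False using W_len[OF x] False by simp
    qed
    then show ?thesis unfolding rhs_seq_def by simp
  qed
  have h: "(\<lambda>n. log 2 (real (r_inv F Q n \<A> G)) / real n) = (\<lambda>n. 0)" using r0 by (simp add: log_def)
  have "h_inv F Q \<A> G = 0" unfolding h_inv_def h by (rule limI) simp
  moreover have "rhs_seq F \<A> G = (\<lambda>n. 0)" using w0 by auto
  ultimately show ?thesis unfolding h by (auto simp: convergent_const)
qed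

lemma main: "convergent (\<lambda>n. log 2 (real (r_inv F Q n \<A> G)) / real n)
         \<and> rhs_seq F \<A> G \<longlonglongrightarrow> h_inv F Q \<A> G"
  using main_empty main_ne by blast

end

theorem theorem3p1:
  fixes F :: "'x \<Rightarrow> 'u \<Rightarrow> 'x set" and Q :: "'x set"
    and \<A> :: "'x set set" and G :: "'x set \<Rightarrow> 'u"
  assumes "is_system F"
    and "controlled_invariant F Q"
    and "quasi_invariant_partition F Q \<A> G"
  shows "convergent (\<lambda>n. log 2 (real (r_inv F Q n \<A> G)) / real n)
         \<and> rhs_seq F \<A> G \<longlonglongrightarrow> h_inv F Q \<A> G"
proof -
  interpret qipl F Q \<A> G using assms(1,3) by unfold_locales
  show ?thesis by (rule main)
qed

end
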